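(* Let two players have additive valuations $v_1,v_2$ on a finite set of goods $M$, normalized so that $v_1(M)=v_2(M)=1$. Assume each has nonzero marginal utility, i.e. $v_i(\{g\})>0$ for every good $g$ and each $i$. Then every leximin solution is both EFX and Pareto optimal.
   Context: A valuation is a function $v:2^M\to\mathbb{R}_{\ge0}$ with $v(\emptyset)=0$ that is monotone: $v(S)\le v(T)$ whenever $S\subseteq T$. It is additive if $v(S)=\sum_{g\in S}v(\{g\})$ for all $S\subseteq M$. An allocation is an ordered partition $(A_1,\dots,A_n)$ of $M$; parts may be empty. It is EFX if for all players $i,j$ and every $g\in A_j$ we have $v_i(A_i)\ge v_i(A_j\setminus\{g\})$. It is Pareto optimal (PO) if there is no allocation $B$ with $v_i(B_i)\ge v_i(A_i)$ for all $i$ and $v_j(B_j)>v_j(A_j)$ for some $j$. For an allocation $A$, consider the multiset of utilities $\{v_i(A_i)\}_i$ sorted in increasing order. The leximin comparison is defined by: $A\prec B$ if and only if the sorted utility vector of $A$ is lexicographically smaller than that of $B$. A leximin solution is an allocation $A$ with no allocation $B$ satisfying $A\prec B$. *)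

theory Defs
  imports "HOL-Analysis.Analysis"
begin

text \<open>Players are indexed by a finite set N of naturals; goods form a finite set M.
  A valuation is v :: 'g set => real, only evaluated on subsets of M.\<close>

definition valuation :: "'g set \<Rightarrow> ('g set \<Rightarrow> real) \<Rightarrow> bool" where
  "valuation M v \<longleftrightarrow> v {} = 0 \<and> (\<forall>S. S \<subseteq> M \<longrightarrow> v S \<ge> 0)
     \<and> (\<forall>S T. S \<subseteq> T \<and> T \<subseteq> M \<longrightarrow> v S \<le> v T)"

definition additive :: "'g set \<Rightarrow> ('g set \<Rightarrow> real) \<Rightarrow> bool" where
  "additive M v \<longleftrightarrow> (\<forall>S. S \<subseteq> M \<longrightarrow> v S = (\<Sum>g\<in>S. v {g}))"

definition allocation :: "nat set \<Rightarrow> 'g set \<Rightarrow> (nat \<Rightarrow> 'g set) \<Rightarrow> bool" where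
  "allocation N M A \<longleftrightarrow> (\<Union>i\<in>N. A i) = M \<and>
     (\<forall>i\<in>N. \<forall>j\<in>N. i \<noteq> j \<longrightarrow> A i \<inter> A j = {})"

definition EFX :: "nat set \<Rightarrow> (nat \<Rightarrow> 'g set \<Rightarrow> real) \<Rightarrow> (nat \<Rightarrow> 'g set) \<Rightarrow> bool" where
  "EFX N v A \<longleftrightarrow> (\<forall>i\<in>N. \<forall>j\<in>N. \<forall>g\<in>A j. v i (A i) \<ge> v i (A j - {g}))"

definition pareto_optimal ::
  "nat set \<Rightarrow> 'g set \<Rightarrow> (nat \<Rightarrow> 'g set \<Rightarrow> real) \<Rightarrow> (nat \<Rightarrow> 'g set) \<Rightarrow> bool" where
  "pareto_optimal N M v A \<longleftrightarrow> allocation N M A \<and>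
     \<not> (\<exists>B. allocation N M B \<and> (\<forall>i\<in>N. v i (B i) \<ge> v i (A i))
             \<and> (\<exists>j\<in>N. v j (B j) > v j (A j)))"

definition utility_vector ::
  "nat set \<Rightarrow> (nat \<Rightarrow> 'g set \<Rightarrow> real) \<Rightarrow> (nat \<Rightarrow> 'g set) \<Rightarrow> real list" where
  "utility_vector N v A = sort (map (\<lambda>i. v i (A i)) (sorted_list_of_set N))"

definition lex_less :: "real list \<Rightarrow> real list \<Rightarrow> bool" where
  "lex_less xs ys \<longleftrightarrow> length xs = length ys \<and>
     (\<exists>k < length xs. take k xs = take k ys \<and> xs ! k < ys ! k)"

definition leximin_less ::
  "nat set \<Rightarrow> (nat \<Rightarrow> 'g set \<Rightarrow> real) \<Rightarrow> (nat \<Rightarrow> 'g set) \<Rightarrow> (nat \<Rightarrow> 'g set) \<Rightarrow> bool" where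
  "leximin_less N v A B \<longleftrightarrow> lex_less (utility_vector N v A) (utility_vector N v B)"

definition leximin_solution ::
  "nat set \<Rightarrow> 'g set \<Rightarrow> (nat \<Rightarrow> 'g set \<Rightarrow> real) \<Rightarrow> (nat \<Rightarrow> 'g set) \<Rightarrow> bool" where
  "leximin_solution N M v A \<longleftrightarrow> allocation N M A \<and>
     \<not> (\<exists>B. allocation N M B \<and> leximin_less N v A B)"

end

theory Submission
  imports Defs
begin

lemma add_un:
  assumes "finite M" "additive M u" "S \<subseteq> M" "T \<subseteq> M" "S \<inter> T = {}"
  shows "u (S \<union> T) = u S + u T"
proof -
  have "finite S" "finite T" using assms by (auto intro: finite_subset)
  then show ?thesis using assms unfolding additive_def
    by (simp add: sum.union_disjoint)
qed

lemma efx_core: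
  assumes fin: "finite M" and au: "additive M u" and aw: "additive M w"
    and uM: "u M = 1" and wM: "w M = 1" and pos: "\<And>h. h \<in> M \<Longrightarrow> u {h} > 0"
    and PQ: "P \<union> Q = M" "P \<inter> Q = {}" and g: "g \<in> Q"
    and env: "u P < u (Q - {g})"
  shows "\<exists>X Y. X \<union> Y = M \<and> X \<inter> Y = {} \<and> u X > u P \<and> w Y > u P"
proof -
  have gM: "g \<in> M" using PQ g by auto
  have Qs: "Q = (Q - {g}) \<union> {g}" using g by auto
  have uQ: "u Q = u (Q - {g}) + u {g}"
    using add_un[OF fin au, of "Q - {g}" "{g}"] PQ g Qs by auto
  have "u M = u P + u Q" using add_un[OF fin au, of P Q] PQ by auto
  hence half: "u P < 1/2" using uQ env pos[OF gM] uM by linarith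
  have u1: "u (P \<union> {g}) = u P + u {g}"
    using add_un[OF fin au, of P "{g}"] PQ g by auto
  have eqM: "(P \<union> {g}) \<union> (Q - {g}) = M" "(P \<union> {g}) \<inter> (Q - {g}) = {}"
    using PQ g by auto
  have w1: "w (P \<union> {g}) + w (Q - {g}) = 1"
    using add_un[OF fin aw, of "P \<union> {g}" "Q - {g}"] eqM wM by auto
  show ?thesis
  proof (cases "w (Q - {g}) > u P")
    case True
    then show ?thesis using eqM u1 pos[OF gM] by (intro exI[of _ "P \<union> {g}"] exI[of _ "Q - {g}"]) auto
  next
    case False
    hence "w (P \<union> {g}) > u P" using w1 half by linarith
    then show ?thesis using eqM env by (intro exI[of _ "Q - {g}"] exI[of _ "P \<union> {g}"]) auto
  qed
qed

lemma uv2: "utility_vector {1,2} v A = [min (v 1 (A 1)) (v 2 (A 2)), max (v 1 (A 1)) (v 2 (A 2))]"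
  unfolding utility_vector_def by (simp add: min_def max_def)

lemma lex1: "a < c \<Longrightarrow> lex_less [a,b] [c,d]"
  unfolding lex_less_def by (intro conjI exI[of _ 0]) auto

lemma lex2: "a = c \<Longrightarrow> b < d \<Longrightarrow> lex_less [a,b] [c,d]"
  unfolding lex_less_def by (intro conjI exI[of _ 1]) auto

lemma alloc2: "allocation {1,2} M B \<longleftrightarrow> B 1 \<union> B 2 = M \<and> B 1 \<inter> B 2 = {}"
  unfolding allocation_def by auto

theorem theorem5p5:
  fixes M :: "'g set" and v :: "nat \<Rightarrow> 'g set \<Rightarrow> real" and A :: "nat \<Rightarrow> 'g set"
  assumes "finite M"
    and "\<And>i. i \<in> {1, 2} \<Longrightarrow> valuation M (v i)"
    and "\<And>i. i \<in> {1, 2} \<Longrightarrow> additive M (v i)"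
    and "\<And>i. i \<in> {1, 2} \<Longrightarrow> v i M = 1"
    and "\<And>i g. i \<in> {1, 2} \<Longrightarrow> g \<in> M \<Longrightarrow> v i {g} > 0"
    and "leximin_solution {1, 2} M v A"
  shows "EFX {1, 2} v A \<and> pareto_optimal {1, 2} M v A"
proof -
  note fin = assms(1)
  have al: "A 1 \<union> A 2 = M" "A 1 \<inter> A 2 = {}" and nb: "\<And>B. allocation {1,2} M B \<Longrightarrow>
      \<not> lex_less (utility_vector {1,2} v A) (utility_vector {1,2} v B)"
    using assms(6) unfolding leximin_solution_def leximin_less_def alloc2 by auto
  have a1: "additive M (v 1)" "additive M (v 2)" using assms(3) by auto
  have n1: "v 1 M = 1" "v 2 M = 1" using assms(4) by auto
  have p1: "\<And>h. h \<in> M \<Longrightarrow> v 1 {h} > 0" "\<And>h. h \<in> M \<Longrightarrow> v 2 {h} > 0" using assms(5) by auto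
  define mA where "mA = min (v 1 (A 1)) (v 2 (A 2))"
  have better: "\<And>X Y. X \<union> Y = M \<Longrightarrow> X \<inter> Y = {} \<Longrightarrow> min (v 1 X) (v 2 Y) > mA \<Longrightarrow> False"
  proof -
    fix X Y assume h: "X \<union> Y = M" "X \<inter> Y = {}" "min (v 1 X) (v 2 Y) > mA"
    let ?B = "\<lambda>x::nat. if x = 1 then X else Y"
    have "allocation {1,2} M ?B" using h unfolding alloc2 by auto
    moreover have "lex_less (utility_vector {1,2} v A) (utility_vector {1,2} v ?B)"
      unfolding uv2 using h(3) mA_def by (auto intro: lex1)
    ultimately show False using nb by blast
  qed
  have mono: "\<And>i S T. i \<in> {1,2} \<Longrightarrow> S \<subseteq> T \<Longrightarrow> T \<subseteq> M \<Longrightarrow> v i S \<le> v i T"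
    using assms(2) unfolding valuation_def by blast
  have efx: "EFX {1,2} v A"
    unfolding EFX_def
  proof (intro ballI)
    fix i j g assume ij: "i \<in> {1,2::nat}" "j \<in> {1,2::nat}" and g: "g \<in> A j"
    show "v i (A j - {g}) \<le> v i (A i)"
    proof (rule ccontr)
      assume env: "\<not> ?thesis"
      show False
      proof (cases "i = j")
        case True
        then show False using env mono[OF ij(1), of "A i - {g}" "A i"] ij al by auto
      next
        case False
        show False
        proof (cases "i = 1")
          case True
          with False ij have j: "j = 2" by auto
          obtain X Y where "X \<union> Y = M" "X \<inter> Y = {}" "v 1 X > v 1 (A 1)" "v 2 Y > v 1 (A 1)"
            using efx_core[OF fin a1(1) a1(2) n1 p1(1) al, of g] g env True j by auto
          then show False using better[of X Y] mA_def by (simp add: min_less_iff_disj; linarith?)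
        next
          case i2: False
          with ij have i: "i = 2" by auto
          with False ij have j: "j = 1" by auto
          have al': "A 2 \<union> A 1 = M" "A 2 \<inter> A 1 = {}" using al by auto
          obtain X Y where XY: "X \<union> Y = M" "X \<inter> Y = {}" "v 2 X > v 2 (A 2)" "v 1 Y > v 2 (A 2)"
            using efx_core[OF fin a1(2) a1(1) n1(2) n1(1) p1(2) al', of g] g env i j by auto
          have "Y \<union> X = M" "Y \<inter> X = {}" using XY by auto
          moreover have "min (v 1 Y) (v 2 X) > mA" using XY mA_def by (simp add: min_less_iff_disj)
          ultimately show False using better by blast
        qed
      qed
    qed
  qed
  have po: "pareto_optimal {1,2} M v A"
    unfolding pareto_optimal_def
  proof (intro conjI notI)
    show "allocation {1,2} M A" using al alloc2 by auto
  next
    assume "\<exists>B. allocation {1, 2} M B \<and> (\<forall>i\<in>{1, 2}. v i (A i) \<le> v i (B i)) \<and>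
      (\<exists>j\<in>{1, 2}. v j (A j) < v j (B j))"
    then obtain B where B: "allocation {1,2} M B" and ge: "v 1 (A 1) \<le> v 1 (B 1)" "v 2 (A 2) \<le> v 2 (B 2)"
      and st: "v 1 (A 1) < v 1 (B 1) \<or> v 2 (A 2) < v 2 (B 2)" by auto
    have "lex_less (utility_vector {1,2} v A) (utility_vector {1,2} v B)"
    proof (cases "min (v 1 (A 1)) (v 2 (A 2)) < min (v 1 (B 1)) (v 2 (B 2))")
      case True then show ?thesis unfolding uv2 by (rule lex1)
    next
      case False
      hence "min (v 1 (A 1)) (v 2 (A 2)) = min (v 1 (B 1)) (v 2 (B 2))" using ge by linarith
      moreover have "max (v 1 (A 1)) (v 2 (A 2)) < max (v 1 (B 1)) (v 2 (B 2))"
        using ge st calculation by (auto simp: min_def max_def split: if_splits)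
      ultimately show ?thesis unfolding uv2 by (rule lex2)
    qed
    then show False using nb B by blast
  qed
  show ?thesis using efx po by blast
qed

end
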